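(* Let $U$ be a $\kappa$-cut with sides $A_1,\dots,A_a$ ($a\ge 2$) and let $W\neq U$ be another $\kappa$-cut with sides $B_1,\dots,B_b$ ($b\ge 2$). Put $T=U\cap W$, $W_i=W\cap A_i$ and $U_j=U\cap B_j$. Then at least one of the following holds. (Laminar type) $W$ is a laminar cut of $U$, and there are indices $i^*,j^*$ with $B_{j^*}\setminus A_{i^*}=(U\setminus W)\cup\bigcup_{i\ne i^*}A_i$ and $A_{i^*}\setminus B_{j^*}=(W\setminus U)\cup\bigcup_{j\neq j^*}B_j$. (Wheel type) $a=b=2$ and $(T;U_1,W_1,U_2,W_2)$ forms a $4$-wheel with sectors $A_1\cap B_1$, $A_1\cap B_2$, $A_2\cap B_2$, $A_2\cap B_1$. (Crossing matching type) $a=b=2$ and, after possibly renaming the two sides of $U$ and/or of $W$, $A_1\cap B_1\ne\emptyset$, $A_2\cap B_2\neq\emptyset$, $A_1\cap B_2=\emptyset$; moreover $|W_2|=|U_1|>0$, $|W_1|=|U_2|>0$, $W$ is a crossing matching cut of $U$ in side $A_1$ with respect to $U_2$, and if in addition $A_2\cap B_1\neq\emptyset$ then $|U_1|\ge|U_2|$. (Small type) $U$ is $(\mathrm{I},\kappa-1)$-small and all small sides of $U$ are contained in $W$, or $W$ is $(\mathrm{I},\kappa-1)$-small and all small sides of $W$ are contained in $U$.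
   Context: Standing conventions: $G=(V,E)$ is a finite, simple, connected, undirected, non-complete graph with $n=|V|$; $\kappa$ is its vertex connectivity (minimum size of a vertex set whose removal disconnects $G$), and it is assumed that $\kappa<n/4$. A cut is a set $U\subset V$ such that the subgraph induced on $V\setminus U$ is disconnected; a $\kappa$-cut is a cut with exactly $\kappa$ vertices. A side of a cut $U$ is (the vertex set of) a connected component of the subgraph induced on $V\setminus U$. A set $S$ disconnects $P$ from the rest of the graph if $P\neq\emptyset$, $P\cap S=\emptyset$, $V\setminus(S\cup P)\ne\emptyset$ and every path from $P$ to $V\setminus(S\cup P)$ meets $S$. Laminar cut: if $U$ is a cut and $P$ a side of $U$, a cut $W$ with $W\subseteq U\cup P$ is a laminar cut of $U$ in side $P$; a laminar cut of $U$ is a laminar cut of $U$ in some side. Small cuts: a cut $U$ with sides $A_1,\dots,A_a$ is $(\mathrm{I},t)$-small if there is an index $i^\sharp$ with $\sum_{i\neq i^\sharp}|A_i|\le t$; then $A_{i^\sharp}$ is its large side and the other sides are its small sides. Wheels: for $w\ge4$ (indices taken modulo $w$), if $V$ is partitioned into pairwise disjoint sets $T,C_1,\dots,C_w,S_1,\dots,S_w$ with all $C_i,S_i$ nonempty ($T$ may be empty) such that for every $i$ the set $C_i\cup T\cup C_{i+2}$ is a $\kappa$-cut that disconnects $S_i\cup C_{i+1}\cup S_{i+1}$ from the rest of the graph, then $(T;C_1,\dots,C_w)$ forms a $w$-wheel with sectors $S_1,\dots,S_w$. Matching cuts: let $U$ be a cut, $A$ a side of $U$, $P\subseteq U$. A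 $\kappa$-cut $W$ is a matching cut of $U$ in side $A$ with respect to $P$ if (i) $U\setminus P\subseteq W\subseteq U\cup A$, (ii) $A\setminus W\neq\emptyset$, and (iii) $W$ disconnects $P\cup(V\setminus(U\cup A))$ from $A\setminus W$ (i.e., these sets are disjoint from $W$ and every path between them meets $W$). If $U$ has exactly two sides $A,B$ and $\emptyset\neq P\subseteq U$, a $\kappa$-cut $W$ is a crossing matching cut of $U$ in side $A$ with respect to $P$ if (i) $W\cap B\neq\emptyset$ and (ii) $(U\setminus P)\cup(W\cap A)$ is a matching cut of $U$ in side $A$ with respect to $P$. *)

theory Defs
  imports Main
begin

definition simple_graph :: "'a set \<Rightarrow> ('a \<Rightarrow> 'a \<Rightarrow> bool) \<Rightarrow> bool" where
  "simple_graph V E \<longleftrightarrow> finite V \<and> (\<forall>u v. E u v \<longrightarrow> u \<in> V \<and> v \<in> V)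
     \<and> (\<forall>u v. E u v \<longrightarrow> E v u) \<and> (\<forall>u. \<not> E u u)"

definition reach_in :: "('a \<Rightarrow> 'a \<Rightarrow> bool) \<Rightarrow> 'a set \<Rightarrow> 'a \<Rightarrow> 'a \<Rightarrow> bool" where
  "reach_in E S x y \<longleftrightarrow> x \<in> S \<and> (\<lambda>u v. E u v \<and> u \<in> S \<and> v \<in> S)\<^sup>*\<^sup>* x y"

definition connected_graph :: "'a set \<Rightarrow> ('a \<Rightarrow> 'a \<Rightarrow> bool) \<Rightarrow> bool" where
  "connected_graph V E \<longleftrightarrow> V \<noteq> {} \<and> (\<forall>x\<in>V. \<forall>y\<in>V. reach_in E V x y)"

definition complete_graph :: "'a set \<Rightarrow> ('a \<Rightarrow> 'a \<Rightarrow> bool) \<Rightarrow> bool" where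
  "complete_graph V E \<longleftrightarrow> (\<forall>x\<in>V. \<forall>y\<in>V. x \<noteq> y \<longrightarrow> E x y)"

definition is_cut :: "'a set \<Rightarrow> ('a \<Rightarrow> 'a \<Rightarrow> bool) \<Rightarrow> 'a set \<Rightarrow> bool" where
  "is_cut V E U \<longleftrightarrow> U \<subseteq> V \<and> (\<exists>x\<in>V - U. \<exists>y\<in>V - U. \<not> reach_in E (V - U) x y)"

definition kappa :: "'a set \<Rightarrow> ('a \<Rightarrow> 'a \<Rightarrow> bool) \<Rightarrow> nat" where
  "kappa V E = (LEAST k. \<exists>U. is_cut V E U \<and> card U = k)"

definition kappa_cut :: "'a set \<Rightarrow> ('a \<Rightarrow> 'a \<Rightarrow> bool) \<Rightarrow> 'a set \<Rightarrow> bool" where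
  "kappa_cut V E U \<longleftrightarrow> is_cut V E U \<and> card U = kappa V E"

definition sides :: "'a set \<Rightarrow> ('a \<Rightarrow> 'a \<Rightarrow> bool) \<Rightarrow> 'a set \<Rightarrow> 'a set set" where
  "sides V E U = {C. \<exists>x\<in>V - U. C = {y. reach_in E (V - U) x y}}"

definition disconnects :: "'a set \<Rightarrow> ('a \<Rightarrow> 'a \<Rightarrow> bool) \<Rightarrow> 'a set \<Rightarrow> 'a set \<Rightarrow> bool" where
  "disconnects V E S P \<longleftrightarrow> P \<subseteq> V \<and> P \<noteq> {} \<and> P \<inter> S = {} \<and> V - (S \<union> P) \<noteq> {}
     \<and> (\<forall>x\<in>P. \<forall>y\<in>V - (S \<union> P). \<not> reach_in E (V - S) x y)"

definition separates :: "'a set \<Rightarrow> ('a \<Rightarrow> 'a \<Rightarrow> bool) \<Rightarrow> 'a set \<Rightarrow> 'a set \<Rightarrow> 'a set \<Rightarrow> bool" where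
  "separates V E W X Y \<longleftrightarrow> X \<inter> W = {} \<and> Y \<inter> W = {}
     \<and> (\<forall>x\<in>X. \<forall>y\<in>Y. \<not> reach_in E (V - W) x y)"

definition laminar_cut :: "'a set \<Rightarrow> ('a \<Rightarrow> 'a \<Rightarrow> bool) \<Rightarrow> 'a set \<Rightarrow> 'a set \<Rightarrow> bool" where
  "laminar_cut V E U W \<longleftrightarrow> is_cut V E U \<and> is_cut V E W \<and> (\<exists>P\<in>sides V E U. W \<subseteq> U \<union> P)"

definition small_with_large_side :: "'a set \<Rightarrow> ('a \<Rightarrow> 'a \<Rightarrow> bool) \<Rightarrow> nat \<Rightarrow> 'a set \<Rightarrow> 'a set \<Rightarrow> bool" where
  "small_with_large_side V E t U L \<longleftrightarrow> is_cut V E U \<and> L \<in> sides V E U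
     \<and> (\<Sum>S\<in>sides V E U - {L}. card S) \<le> t"

definition I_small :: "'a set \<Rightarrow> ('a \<Rightarrow> 'a \<Rightarrow> bool) \<Rightarrow> nat \<Rightarrow> 'a set \<Rightarrow> bool" where
  "I_small V E t U \<longleftrightarrow> (\<exists>L. small_with_large_side V E t U L)"

(* w-wheel (T; C_1..C_w) with sectors S_1..S_w; lists are 0-indexed, indices taken mod w *)
definition forms_wheel :: "'a set \<Rightarrow> ('a \<Rightarrow> 'a \<Rightarrow> bool) \<Rightarrow> nat \<Rightarrow> 'a set \<Rightarrow> 'a set list \<Rightarrow> 'a set list \<Rightarrow> bool" where
  "forms_wheel V E w T C S \<longleftrightarrow> w \<ge> 4 \<and> length C = w \<and> length S = w
     \<and> T \<union> \<Union>(set C) \<union> \<Union>(set S) = V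
     \<and> (\<forall>i<w. T \<inter> C ! i = {} \<and> T \<inter> S ! i = {} \<and> C ! i \<noteq> {} \<and> S ! i \<noteq> {})
     \<and> (\<forall>i<w. \<forall>j<w. C ! i \<inter> S ! j = {})
     \<and> (\<forall>i<w. \<forall>j<w. i \<noteq> j \<longrightarrow> C ! i \<inter> C ! j = {} \<and> S ! i \<inter> S ! j = {})
     \<and> (\<forall>i<w. kappa_cut V E (C ! i \<union> T \<union> C ! ((i + 2) mod w))
            \<and> disconnects V E (C ! i \<union> T \<union> C ! ((i + 2) mod w))
                 (S ! i \<union> C ! ((i + 1) mod w) \<union> S ! ((i + 1) mod w)))"

definition matching_cut :: "'a set \<Rightarrow> ('a \<Rightarrow> 'a \<Rightarrow> bool) \<Rightarrow> 'a set \<Rightarrow> 'a set \<Rightarrow> 'a set \<Rightarrow> 'a set \<Rightarrow> bool" where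
  "matching_cut V E U A P W \<longleftrightarrow> is_cut V E U \<and> A \<in> sides V E U \<and> P \<subseteq> U
     \<and> kappa_cut V E W \<and> U - P \<subseteq> W \<and> W \<subseteq> U \<union> A \<and> A - W \<noteq> {}
     \<and> separates V E W (P \<union> (V - (U \<union> A))) (A - W)"

definition crossing_matching_cut :: "'a set \<Rightarrow> ('a \<Rightarrow> 'a \<Rightarrow> bool) \<Rightarrow> 'a set \<Rightarrow> 'a set \<Rightarrow> 'a set \<Rightarrow> 'a set \<Rightarrow> bool" where
  "crossing_matching_cut V E U A P W \<longleftrightarrow> is_cut V E U \<and> P \<noteq> {} \<and> P \<subseteq> U
     \<and> (\<exists>B. B \<noteq> A \<and> sides V E U = {A, B} \<and> kappa_cut V E W \<and> W \<inter> B \<noteq> {}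
          \<and> matching_cut V E U A P ((U - P) \<union> (W \<inter> A)))"

end

theory Submission
  imports Defs
begin

lemma reach_in_refl: "x \<in> S \<Longrightarrow> reach_in E S x x"
  by (simp add: reach_in_def)

lemma reach_in_trans: "reach_in E S x y \<Longrightarrow> reach_in E S y z \<Longrightarrow> reach_in E S x z"
  unfolding reach_in_def using rtranclp_trans[of "\<lambda>u v. E u v \<and> u \<in> S \<and> v \<in> S" x y z] by blast

lemma reach_in_memD: "reach_in E S x y \<Longrightarrow> x \<in> S \<and> y \<in> S"
proof -
  have "(\<lambda>u v. E u v \<and> u \<in> S \<and> v \<in> S)\<^sup>*\<^sup>* x y \<Longrightarrow> x \<in> S \<Longrightarrow> y \<in> S"
    by (induction rule: rtranclp_induct) auto
  then show "reach_in E S x y \<Longrightarrow> x \<in> S \<and> y \<in> S" unfolding reach_in_def by blast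
qed

lemma reach_in_step: "reach_in E S x y \<Longrightarrow> E y z \<Longrightarrow> z \<in> S \<Longrightarrow> reach_in E S x z"
proof -
  assume a: "reach_in E S x y" "E y z" "z \<in> S"
  then have y: "y \<in> S" using reach_in_memD by fast
  have "(\<lambda>u v. E u v \<and> u \<in> S \<and> v \<in> S)\<^sup>*\<^sup>* x y" using a(1) unfolding reach_in_def by simp
  moreover have "(\<lambda>u v. E u v \<and> u \<in> S \<and> v \<in> S) y z" using a y by simp
  ultimately have "(\<lambda>u v. E u v \<and> u \<in> S \<and> v \<in> S)\<^sup>*\<^sup>* x z" by (rule rtranclp.rtrancl_into_rtrancl)
  then show ?thesis using a(1) unfolding reach_in_def by simp
qed

lemma reach_in_edge: "x \<in> S \<Longrightarrow> z \<in> S \<Longrightarrow> E x z \<Longrightarrow> reach_in E S x z"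
  by (rule reach_in_step[OF reach_in_refl])

lemma reach_in_sym:
  assumes sym: "\<forall>u v. E u v \<longrightarrow> E v u" and r: "reach_in E S x y"
  shows "reach_in E S y x"
proof -
  have "(\<lambda>u v. E u v \<and> u \<in> S \<and> v \<in> S)\<^sup>*\<^sup>* x y \<Longrightarrow> x \<in> S \<Longrightarrow> reach_in E S y x"
  proof (induction rule: rtranclp_induct)
    case base then show ?case by (rule reach_in_refl)
  next
    case (step y z)
    then have "E z y" "z \<in> S" "y \<in> S" using sym by auto
    then have "reach_in E S z y" by (simp add: reach_in_edge)
    then show ?case using step(3)[OF step(4)] by (rule reach_in_trans)
  qed
  moreover have "(\<lambda>u v. E u v \<and> u \<in> S \<and> v \<in> S)\<^sup>*\<^sup>* x y" "x \<in> S" using r unfolding reach_in_def by simp_all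
  ultimately show ?thesis by simp
qed

lemma reach_in_closed:
  assumes x: "x \<in> C" and cl: "\<And>c z. c \<in> C \<Longrightarrow> z \<in> S \<Longrightarrow> E c z \<Longrightarrow> z \<in> C"
    and r: "reach_in E S x y"
  shows "y \<in> C"
proof -
  have "(\<lambda>u v. E u v \<and> u \<in> S \<and> v \<in> S)\<^sup>*\<^sup>* x y \<Longrightarrow> y \<in> C"
  proof (induction rule: rtranclp_induct)
    case base then show ?case by (rule x)
  next
    case (step y z)
    then have "E y z" "z \<in> S" by auto
    then show ?case using cl[OF step(3)] by simp
  qed
  moreover have "(\<lambda>u v. E u v \<and> u \<in> S \<and> v \<in> S)\<^sup>*\<^sup>* x y" using r unfolding reach_in_def by simp
  ultimately show ?thesis by simp
qed

lemma reach_in_within: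
  assumes x: "x \<in> C" and CS: "C \<subseteq> S" and cl: "\<And>c z. c \<in> C \<Longrightarrow> z \<in> S \<Longrightarrow> E c z \<Longrightarrow> z \<in> C"
    and r: "reach_in E S x y"
  shows "reach_in E C x y"
proof -
  have "(\<lambda>u v. E u v \<and> u \<in> S \<and> v \<in> S)\<^sup>*\<^sup>* x y \<Longrightarrow> reach_in E C x y"
  proof (induction rule: rtranclp_induct)
    case base then show ?case using x by (rule reach_in_refl)
  next
    case (step y z)
    then have e: "E y z" "z \<in> S" by auto
    have "y \<in> C" using reach_in_memD[OF step(3)] by simp
    then have "z \<in> C" using cl e by simp
    then show ?case using step(3) e(1) by (rule_tac reach_in_step) 
  qed
  moreover have "(\<lambda>u v. E u v \<and> u \<in> S \<and> v \<in> S)\<^sup>*\<^sup>* x y" using r unfolding reach_in_def by simp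
  ultimately show ?thesis by simp
qed

lemma reach_in_mono: "S \<subseteq> S' \<Longrightarrow> reach_in E S x y \<Longrightarrow> reach_in E S' x y"
proof -
  assume sub: "S \<subseteq> S'" and r: "reach_in E S x y"
  have "(\<lambda>u v. E u v \<and> u \<in> S \<and> v \<in> S)\<^sup>*\<^sup>* x y \<Longrightarrow> x \<in> S \<Longrightarrow> reach_in E S' x y"
  proof (induction rule: rtranclp_induct)
    case base then show ?case using sub by (simp add: reach_in_refl subsetD)
  next
    case (step y z)
    then have "E y z" "z \<in> S'" using sub by auto
    then show ?case using step(3)[OF step(4)] by (rule_tac reach_in_step) 
  qed
  moreover have "(\<lambda>u v. E u v \<and> u \<in> S \<and> v \<in> S)\<^sup>*\<^sup>* x y" "x \<in> S" using r unfolding reach_in_def by simp_all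
  ultimately show ?thesis by simp
qed

lemma side_sub: "X \<in> sides V E U \<Longrightarrow> X \<subseteq> V - U"
proof
  fix y assume "X \<in> sides V E U" "y \<in> X"
  then obtain x0 where "x0 \<in> V - U" "X = {y. reach_in E (V - U) x0 y}" unfolding sides_def by blast
  then show "y \<in> V - U" using \<open>y \<in> X\<close> reach_in_memD by fastforce
qed

lemma side_of: "x \<in> V - U \<Longrightarrow> {y. reach_in E (V - U) x y} \<in> sides V E U \<and> x \<in> {y. reach_in E (V - U) x y}"
  unfolding sides_def using reach_in_refl[of x "V - U" E] by blast

lemma side_ne: "X \<in> sides V E U \<Longrightarrow> X \<noteq> {}"
proof -
  assume "X \<in> sides V E U"
  then obtain x0 where "x0 \<in> V - U" "X = {y. reach_in E (V - U) x0 y}" unfolding sides_def by blast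
  then have "x0 \<in> X" using reach_in_refl[of x0 "V - U" E] by simp
  then show ?thesis by blast
qed

lemma side_eq:
  assumes sym: "\<forall>u v. E u v \<longrightarrow> E v u" and X: "X \<in> sides V E U" and x: "x \<in> X"
  shows "X = {y. reach_in E (V - U) x y}"
proof -
  obtain x0 where X0: "X = {y. reach_in E (V - U) x0 y}" using X unfolding sides_def by blast
  then have r: "reach_in E (V - U) x0 x" using x by simp
  then have r': "reach_in E (V - U) x x0" by (rule reach_in_sym[OF sym])
  have "reach_in E (V - U) x0 y = reach_in E (V - U) x y" for y
  proof
    assume "reach_in E (V - U) x0 y" then show "reach_in E (V - U) x y" by (rule reach_in_trans[OF r'])
  next
    assume "reach_in E (V - U) x y" then show "reach_in E (V - U) x0 y" by (rule reach_in_trans[OF r])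
  qed
  then show ?thesis unfolding X0 by (intro set_eqI) simp
qed

lemma side_unique:
  assumes sym: "\<forall>u v. E u v \<longrightarrow> E v u" and "X \<in> sides V E U" "X' \<in> sides V E U" "x \<in> X" "x \<in> X'"
  shows "X = X'"
  using side_eq[OF sym assms(2) assms(4)] side_eq[OF sym assms(3) assms(5)] by simp

lemma sides_disj:
  assumes sym: "\<forall>u v. E u v \<longrightarrow> E v u" and "X \<in> sides V E U" "X' \<in> sides V E U" "X \<noteq> X'"
  shows "X \<inter> X' = {}"
proof (rule ccontr)
  assume "X \<inter> X' \<noteq> {}"
  then obtain x where "x \<in> X" "x \<in> X'" by blast
  then show False using side_unique[OF sym assms(2,3)] assms(4) by blast
qed

lemma side_reach:
  assumes sym: "\<forall>u v. E u v \<longrightarrow> E v u" and X: "X \<in> sides V E U" and x: "x \<in> X"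
    and r: "reach_in E (V - U) x y"
  shows "y \<in> X"
  using side_eq[OF sym X x] r by simp

lemma side_closed:
  assumes sym: "\<forall>u v. E u v \<longrightarrow> E v u" and X: "X \<in> sides V E U" and x: "x \<in> X"
    and e: "E x z" and z: "z \<in> V - U"
  shows "z \<in> X"
proof -
  have "x \<in> V - U" using side_sub[OF X] x by blast
  then have "reach_in E (V - U) x z" using e z by (simp add: reach_in_edge)
  then show ?thesis using side_reach[OF sym X x] by blast
qed

lemma side_connected:
  assumes sym: "\<forall>u v. E u v \<longrightarrow> E v u" and X: "X \<in> sides V E U" and x: "x \<in> X" and y: "y \<in> X"
  shows "reach_in E X x y"
proof -
  have r: "reach_in E (V - U) x y" using side_eq[OF sym X x] y by simp
  show ?thesis
  proof (rule reach_in_within[OF x side_sub[OF X] _ r])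
    fix c z assume "c \<in> X" "z \<in> V - U" "E c z"
    then show "z \<in> X" using side_closed[OF sym X] by blast
  qed
qed

lemma sides_cover: "V - U = \<Union>(sides V E U)"
proof
  show "V - U \<subseteq> \<Union>(sides V E U)"
  proof
    fix x assume "x \<in> V - U"
    from side_of[OF this, of E] show "x \<in> \<Union>(sides V E U)" by blast
  qed
  show "\<Union>(sides V E U) \<subseteq> V - U" using side_sub by blast
qed

lemma in_some_side: "x \<in> V \<Longrightarrow> x \<notin> U \<Longrightarrow> \<exists>X\<in>sides V E U. x \<in> X"
  using side_of[of x V U E] by blast

lemma finite_sides: "finite V \<Longrightarrow> finite (sides V E U)"
proof -
  assume "finite V"
  have "sides V E U \<subseteq> Pow V" using side_sub by blast
  then show ?thesis using \<open>finite V\<close> finite_subset by blast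
qed

lemma kappa_le: "is_cut V E X \<Longrightarrow> kappa V E \<le> card X"
  unfolding kappa_def by (rule Least_le) blast

lemma neighbor:
  assumes g: "simple_graph V E" and U: "kappa_cut V E U"
    and X: "X \<in> sides V E U" and X': "X' \<in> sides V E U" and XX: "X \<noteq> X'" and u: "u \<in> U"
  shows "\<exists>x\<in>X. E u x"
proof (rule ccontr)
  assume no: "\<not> (\<exists>x\<in>X. E u x)"
  have sym: "\<forall>u v. E u v \<longrightarrow> E v u" and fin: "finite V" using g unfolding simple_graph_def by auto
  have UV: "U \<subseteq> V" using U unfolding kappa_cut_def is_cut_def by auto
  let ?U' = "U - {u}"
  obtain x where x: "x \<in> X" using side_ne[OF X] by blast
  obtain y where y: "y \<in> X'" using side_ne[OF X'] by blast
  have xV: "x \<in> V - ?U'" "y \<in> V - ?U'" using x y side_sub[OF X] side_sub[OF X'] by auto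
  have yX: "y \<notin> X" using sides_disj[OF sym X X' XX] y by blast
  have nr: "\<not> reach_in E (V - ?U') x y"
  proof
    assume r: "reach_in E (V - ?U') x y"
    have "y \<in> X"
    proof (rule reach_in_closed[OF x _ r])
      fix c z assume c: "c \<in> X" and z: "z \<in> V - ?U'" and e: "E c z"
      show "z \<in> X"
      proof (cases "z = u")
        case True then show ?thesis using sym e no c by blast
      next
        case False then have "z \<in> V - U" using z by blast
        then show ?thesis using side_closed[OF sym X c e] by blast
      qed
    qed
    then show False using yX by blast
  qed
  have cut: "is_cut V E ?U'" unfolding is_cut_def using xV UV nr by blast
  have finU: "finite U" using UV fin finite_subset by blast
  have "card ?U' < card U" using finU u by (meson card_Diff1_less)
  moreover have "card U = kappa V E" using U unfolding kappa_cut_def by simp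
  ultimately show False using kappa_le[OF cut] by simp
qed

lemma card3_le: "card (A \<union> B \<union> C) \<le> card A + card B + card C"
proof -
  have "card (A \<union> B \<union> C) \<le> card (A \<union> B) + card C" by (rule card_Un_le)
  moreover have "card (A \<union> B) \<le> card A + card B" by (rule card_Un_le)
  ultimately show ?thesis by simp
qed

lemma card3_eq: "finite A \<Longrightarrow> finite B \<Longrightarrow> finite C \<Longrightarrow> A \<inter> B = {} \<Longrightarrow> A \<inter> C = {} \<Longrightarrow> B \<inter> C = {}
  \<Longrightarrow> card (A \<union> B \<union> C) = card A + card B + card C"
proof -
  assume f: "finite A" "finite B" "finite C" and d: "A \<inter> B = {}" "A \<inter> C = {}" "B \<inter> C = {}"
  have "(A \<union> B) \<inter> C = {}" using d by blast
  then have "card (A \<union> B \<union> C) = card (A \<union> B) + card C" using f by (simp add: card_Un_disjoint)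
  moreover have "card (A \<union> B) = card A + card B" using f d by (simp add: card_Un_disjoint)
  ultimately show ?thesis by simp
qed

lemma corner_closed:
  assumes sym: "\<forall>u v. E u v \<longrightarrow> E v u"
    and X: "X \<in> sides V E U" and Y: "Y \<in> sides V E W"
    and c: "c \<in> X \<inter> Y" and z: "z \<in> V - ((W \<inter> X) \<union> (U \<inter> W) \<union> (U \<inter> Y))" and e: "E c z"
  shows "z \<in> X \<inter> Y"
proof -
  have cX: "c \<in> X" and cY: "c \<in> Y" using c by auto
  have zU: "z \<notin> U"
  proof
    assume zU: "z \<in> U"
    then have "z \<notin> W" using z by blast
    then have "z \<in> Y" using side_closed[OF sym Y cY e] z by blast
    then show False using z zU by blast
  qed
  then have zX: "z \<in> X" using side_closed[OF sym X cX e] z by blast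
  then have "z \<notin> W" using z by blast
  then have "z \<in> Y" using side_closed[OF sym Y cY e] z by blast
  then show ?thesis using zX by blast
qed

lemma corner_cut:
  assumes sym: "\<forall>u v. E u v \<longrightarrow> E v u" and UV: "U \<subseteq> V" and WV: "W \<subseteq> V"
    and X: "X \<in> sides V E U" and Y: "Y \<in> sides V E W" and XY: "X \<inter> Y \<noteq> {}"
    and X': "X' \<in> sides V E U" and XX': "X \<noteq> X'"
  shows "is_cut V E ((W \<inter> X) \<union> (U \<inter> W) \<union> (U \<inter> Y))"
proof -
  let ?N = "(W \<inter> X) \<union> (U \<inter> W) \<union> (U \<inter> Y)"
  obtain x where x: "x \<in> X \<inter> Y" using XY by blast
  obtain y where y: "y \<in> X'" using side_ne[OF X'] by blast
  have xN: "x \<in> V - ?N" using x side_sub[OF X] side_sub[OF Y] by blast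
  have yN: "y \<in> V - ?N" "y \<notin> X \<inter> Y" using y side_sub[OF X'] sides_disj[OF sym X X' XX'] by blast+
  have nr: "\<not> reach_in E (V - ?N) x y"
  proof
    assume r: "reach_in E (V - ?N) x y"
    have "y \<in> X \<inter> Y"
    proof (rule reach_in_closed[OF x _ r])
      fix c z assume "c \<in> X \<inter> Y" "z \<in> V - ?N" "E c z"
      then show "z \<in> X \<inter> Y" by (rule corner_closed[OF sym X Y])
    qed
    then show False using yN by blast
  qed
  have "?N \<subseteq> V" using UV WV by blast
  then show ?thesis unfolding is_cut_def using xN yN nr by blast
qed

lemma diag:
  assumes g: "simple_graph V E" and Uc: "kappa_cut V E U" and Wc: "kappa_cut V E W"
    and X: "X \<in> sides V E U" and X': "X' \<in> sides V E U" and XX': "X \<noteq> X'"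
    and Y: "Y \<in> sides V E W" and Y': "Y' \<in> sides V E W" and YY': "Y \<noteq> Y'"
    and XY: "X \<inter> Y \<noteq> {}" and XY': "X' \<inter> Y' \<noteq> {}"
  shows "card (W \<inter> X) + card (U \<inter> W) + card (U \<inter> Y) = kappa V E"
    and "card (W \<inter> X') + card (U \<inter> W) + card (U \<inter> Y') = kappa V E"
    and "card (W \<inter> X) + card (W \<inter> X') + card (U \<inter> W) = kappa V E"
    and "card (U \<inter> Y) + card (U \<inter> Y') + card (U \<inter> W) = kappa V E"
    and "W \<subseteq> X \<union> X' \<union> U" and "U \<subseteq> Y \<union> Y' \<union> W"
proof -
  have sym: "\<forall>u v. E u v \<longrightarrow> E v u" and fin: "finite V" using g unfolding simple_graph_def by auto
  have UV: "U \<subseteq> V" and cU: "card U = kappa V E" using Uc unfolding kappa_cut_def is_cut_def by auto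
  have WV: "W \<subseteq> V" and cW: "card W = kappa V E" using Wc unfolding kappa_cut_def is_cut_def by auto
  have fU: "finite U" and fW: "finite W" using UV WV fin finite_subset by blast+
  have k1: "kappa V E \<le> card (W \<inter> X) + card (U \<inter> W) + card (U \<inter> Y)"
    using kappa_le[OF corner_cut[OF sym UV WV X Y XY X' XX']] card3_le order_trans by blast
  have k2: "kappa V E \<le> card (W \<inter> X') + card (U \<inter> W) + card (U \<inter> Y')"
    using kappa_le[OF corner_cut[OF sym UV WV X' Y' XY' X XX'[symmetric]]] card3_le order_trans by blast
  have dX: "X \<inter> X' = {}" using sides_disj[OF sym X X' XX'] .
  have dY: "Y \<inter> Y' = {}" using sides_disj[OF sym Y Y' YY'] .
  have sX: "X \<subseteq> V - U" "X' \<subseteq> V - U" using side_sub[OF X] side_sub[OF X'] .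
  have sY: "Y \<subseteq> V - W" "Y' \<subseteq> V - W" using side_sub[OF Y] side_sub[OF Y'] .
  let ?ZW = "(W \<inter> X) \<union> (W \<inter> X') \<union> (U \<inter> W)"
  let ?ZU = "(U \<inter> Y) \<union> (U \<inter> Y') \<union> (U \<inter> W)"
  have eW: "card ?ZW = card (W \<inter> X) + card (W \<inter> X') + card (U \<inter> W)"
    by (rule card3_eq) (use fW fU dX sX in auto)
  have eU: "card ?ZU = card (U \<inter> Y) + card (U \<inter> Y') + card (U \<inter> W)"
    by (rule card3_eq) (use fW fU dY sY in auto)
  have ZW: "?ZW \<subseteq> W" by blast
  have ZU: "?ZU \<subseteq> U" by blast
  have lW: "card ?ZW \<le> card W" using ZW fW by (rule card_mono[rotated])
  have lU: "card ?ZU \<le> card U" using ZU fU by (rule card_mono[rotated])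
  show "card (W \<inter> X) + card (U \<inter> W) + card (U \<inter> Y) = kappa V E"
    using k1 k2 lW lU eW eU cW cU by linarith
  show "card (W \<inter> X') + card (U \<inter> W) + card (U \<inter> Y') = kappa V E"
    using k1 k2 lW lU eW eU cW cU by linarith
  show e3: "card (W \<inter> X) + card (W \<inter> X') + card (U \<inter> W) = kappa V E"
    using k1 k2 lW lU eW eU cW cU by linarith
  show e4: "card (U \<inter> Y) + card (U \<inter> Y') + card (U \<inter> W) = kappa V E"
    using k1 k2 lW lU eW eU cW cU by linarith
  have "?ZW = W" using card_subset_eq[OF fW ZW] e3 eW cW by simp
  then show "W \<subseteq> X \<union> X' \<union> U" by blast
  have "?ZU = U" using card_subset_eq[OF fU ZU] e4 eU cU by simp
  then show "U \<subseteq> Y \<union> Y' \<union> W" by blast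
qed

lemma third_side:
  assumes g: "simple_graph V E" and Uc: "kappa_cut V E U" and Wc: "kappa_cut V E W"
    and X: "X \<in> sides V E U" and X': "X' \<in> sides V E U" and XX': "X \<noteq> X'"
    and Y: "Y \<in> sides V E W" and Y': "Y' \<in> sides V E W" and YY': "Y \<noteq> Y'"
    and XY: "X \<inter> Y \<noteq> {}" and XY': "X' \<inter> Y' \<noteq> {}"
    and WX: "W \<inter> X \<noteq> {}" and WX': "W \<inter> X' \<noteq> {}"
  shows "sides V E U = {X, X'}"
proof -
  have sym: "\<forall>u v. E u v \<longrightarrow> E v u" using g unfolding simple_graph_def by auto
  have Wsub: "W \<subseteq> X \<union> X' \<union> U" by (rule diag(5)[OF g Uc Wc X X' XX' Y Y' YY' XY XY'])
  have "X'' \<in> {X, X'}" if X'': "X'' \<in> sides V E U" for X''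
  proof (rule ccontr)
    assume n: "X'' \<notin> {X, X'}"
    have d1: "X'' \<inter> X = {}" using sides_disj[OF sym X'' X] n by blast
    have d2: "X'' \<inter> X' = {}" using sides_disj[OF sym X'' X'] n by blast
    have sX'': "X'' \<subseteq> V - U" by (rule side_sub[OF X''])
    have "W \<inter> X'' = {}" using Wsub d1 d2 sX'' by blast
    obtain x where x: "x \<in> X''" using side_ne[OF X''] by blast
    have xW: "x \<in> V - W" using sX'' x \<open>W \<inter> X'' = {}\<close> by blast
    define Y'' where "Y'' = {y. reach_in E (V - W) x y}"
    have Y'': "Y'' \<in> sides V E W" and xY: "x \<in> Y''" using side_of[OF xW, of E] Y''_def by auto
    have XY'': "X'' \<inter> Y'' \<noteq> {}" using x xY by blast
    have dXX': "X \<inter> X' = {}" by (rule sides_disj[OF sym X X' XX'])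
    have sX: "X \<subseteq> V - U" "X' \<subseteq> V - U" using side_sub[OF X] side_sub[OF X'] .
    show False
    proof (cases "Y'' = Y")
      case False
      have "X'' \<noteq> X" using n by blast
      then have "W \<subseteq> X'' \<union> X \<union> U" by (rule diag(5)[OF g Uc Wc X'' X _ Y'' Y False XY'' XY])
      then show False using WX' d2 dXX' sX by blast
    next
      case True
      then have ne: "Y'' \<noteq> Y'" using YY' by simp
      have "X'' \<noteq> X'" using n by blast
      then have "W \<subseteq> X'' \<union> X' \<union> U" by (rule diag(5)[OF g Uc Wc X'' X' _ Y'' Y' ne XY'' XY'])
      then show False using WX d1 dXX' sX by blast
    qed
  qed
  then show ?thesis using X X' by blast
qed

lemma other_side:
  assumes "finite S" "card S \<ge> 2" "X \<in> S" shows "\<exists>X'\<in>S. X' \<noteq> X"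
proof (rule ccontr)
  assume "\<not> (\<exists>X'\<in>S. X' \<noteq> X)"
  then have "S \<subseteq> {X}" by blast
  then have "card S \<le> 1" using card_mono[of "{X}" S] by simp
  then show False using assms(2) by simp
qed

lemma laminar_case:
  fixes a b :: nat
  assumes g: "simple_graph V E" and Uc: "kappa_cut V E U" and Wc: "kappa_cut V E W" and UW: "W \<noteq> U"
    and a2: "a \<ge> 2"
    and A_sides: "bij_betw A {1..a} (sides V E U)"
    and B_sides: "bij_betw B {1..b} (sides V E W)"
    and X: "X \<in> sides V E U" and WX: "W \<subseteq> U \<union> X"
  shows "laminar_cut V E U W \<and>
       (\<exists>i\<in>{1..a}. \<exists>j\<in>{1..b}.
          B j - A i = (U - W) \<union> (\<Union>k\<in>{1..a} - {i}. A k) \<and>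
          A i - B j = (W - U) \<union> (\<Union>k\<in>{1..b} - {j}. B k))"
proof -
  have sym: "\<forall>u v. E u v \<longrightarrow> E v u" and fin: "finite V" using g unfolding simple_graph_def by auto
  have UV: "U \<subseteq> V" and cU: "card U = kappa V E" and Ucut: "is_cut V E U" using Uc unfolding kappa_cut_def is_cut_def by auto
  have WV: "W \<subseteq> V" and cW: "card W = kappa V E" and Wcut: "is_cut V E W" using Wc unfolding kappa_cut_def is_cut_def by auto
  have fU: "finite U" and fW: "finite W" using UV WV fin finite_subset by blast+
  have "\<not> U \<subseteq> W"
  proof
    assume "U \<subseteq> W"
    then have "U = W" using card_subset_eq[OF fW] cU cW by simp
    then show False using UW by simp
  qed
  then obtain u0 where u0: "u0 \<in> U" "u0 \<notin> W" by blast
  have cardS: "card (sides V E U) = a" using bij_betw_same_card[OF A_sides] by simp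
  obtain X' where X': "X' \<in> sides V E U" "X' \<noteq> X"
    using other_side[OF finite_sides[OF fin] _ X] cardS a2 by auto
  have oth: "X'' \<inter> W = {}" if "X'' \<in> sides V E U" "X'' \<noteq> X" for X''
    using sides_disj[OF sym that(1) X that(2)] side_sub[OF that(1)] WX by blast
  have u0V: "u0 \<in> V - W" using u0 UV by blast
  define Y where "Y = {y. reach_in E (V - W) u0 y}"
  have Y: "Y \<in> sides V E W" and u0Y: "u0 \<in> Y" using side_of[OF u0V, of E] Y_def by auto
  have sideinY: "X'' \<subseteq> Y" if X'': "X'' \<in> sides V E U" "X'' \<noteq> X" for X''
  proof
    fix y assume y: "y \<in> X''"
    obtain x where x: "x \<in> X''" "E u0 x" using neighbor[OF g Uc X''(1) X X''(2) u0(1)] by blast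
    have sub: "X'' \<subseteq> V - W" using oth[OF X''] side_sub[OF X''(1)] by blast
    have xV: "x \<in> V - W" using x(1) sub by blast
    have r1: "reach_in E (V - W) u0 x" using reach_in_edge[of u0 "V - W" x E] u0V xV x(2) by blast
    have "reach_in E X'' x y" by (rule side_connected[OF sym X''(1) x(1) y])
    then have "reach_in E (V - W) x y" by (rule reach_in_mono[OF sub])
    then have "reach_in E (V - W) u0 y" by (rule reach_in_trans[OF r1])
    then show "y \<in> Y" unfolding Y_def by simp
  qed
  have UWY: "U - W \<subseteq> Y"
  proof
    fix u assume u: "u \<in> U - W"
    obtain x where x: "x \<in> X'" "E u x" using neighbor[OF g Uc X'(1) X X'(2)] u by blast
    have xY: "x \<in> Y" using sideinY[OF X'] x by blast
    then have r1: "reach_in E (V - W) u0 x" unfolding Y_def by simp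
    have "x \<in> V - W" using reach_in_memD[OF r1] by simp
    moreover have "u \<in> V - W" using u UV by blast
    moreover have "E x u" using x(2) sym by blast
    ultimately have "reach_in E (V - W) x u" using reach_in_edge[of x "V - W" u E] by blast
    then have "reach_in E (V - W) u0 u" by (rule reach_in_trans[OF r1])
    then show "u \<in> Y" unfolding Y_def by simp
  qed
  have sY: "Y \<subseteq> V - W" by (rule side_sub[OF Y])
  have sX: "X \<subseteq> V - U" by (rule side_sub[OF X])
  have Aim: "A ` {1..a} = sides V E U" using A_sides by (rule bij_betw_imp_surj_on)
  have Bim: "B ` {1..b} = sides V E W" using B_sides by (rule bij_betw_imp_surj_on)
  have Ainj: "inj_on A {1..a}" using A_sides by (rule bij_betw_imp_inj_on)
  have Binj: "inj_on B {1..b}" using B_sides by (rule bij_betw_imp_inj_on)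
  have "X \<in> A ` {1..a}" using X Aim by simp
  then obtain i where i: "i \<in> {1..a}" "A i = X" by (metis imageE)
  have "Y \<in> B ` {1..b}" using Y Bim by simp
  then obtain j where j: "j \<in> {1..b}" "B j = Y" by (metis imageE)
  have Ak: "A k \<in> sides V E U" "A k \<noteq> X" if k: "k \<in> {1..a} - {i}" for k
  proof -
    have k1: "k \<in> {1..a}" and ki: "k \<noteq> i" using k by auto
    show "A k \<in> sides V E U" using k1 Aim by (metis imageI)
    show "A k \<noteq> X"
    proof
      assume "A k = X" then have "A k = A i" using i by simp
      then have "k = i" using inj_onD[OF Ainj _ k1 i(1)] by simp
      then show False using ki by simp
    qed
  qed
  have Bk: "B k \<in> sides V E W" "B k \<noteq> Y" if k: "k \<in> {1..b} - {j}" for k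
  proof -
    have k1: "k \<in> {1..b}" and ki: "k \<noteq> j" using k by auto
    show "B k \<in> sides V E W" using k1 Bim by (metis imageI)
    show "B k \<noteq> Y"
    proof
      assume "B k = Y" then have "B k = B j" using j by simp
      then have "k = j" using inj_onD[OF Binj _ k1 j(1)] by simp
      then show False using ki by simp
    qed
  qed
  have eq1: "B j - A i = (U - W) \<union> (\<Union>k\<in>{1..a} - {i}. A k)"
  proof
    show "B j - A i \<subseteq> (U - W) \<union> (\<Union>k\<in>{1..a} - {i}. A k)"
    proof
      fix y assume y: "y \<in> B j - A i"
      then have yY: "y \<in> Y" "y \<notin> X" using i j by auto
      then have yV: "y \<in> V - W" using sY by blast
      show "y \<in> (U - W) \<union> (\<Union>k\<in>{1..a} - {i}. A k)"
      proof (cases "y \<in> U")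
        case True then show ?thesis using yV by blast
      next
        case False
        then obtain X'' where X'': "X'' \<in> sides V E U" "y \<in> X''" using in_some_side[of y V U E] yV by blast
        then have "X'' \<in> A ` {1..a}" using Aim by simp
        then obtain k where k: "k \<in> {1..a}" "A k = X''" by (metis imageE)
        have "k \<noteq> i" using k i yY X'' by blast
        then show ?thesis using k X'' by blast
      qed
    qed
    show "(U - W) \<union> (\<Union>k\<in>{1..a} - {i}. A k) \<subseteq> B j - A i"
    proof
      fix y assume y: "y \<in> (U - W) \<union> (\<Union>k\<in>{1..a} - {i}. A k)"
      show "y \<in> B j - A i"
      proof (cases "y \<in> U - W")
        case True then show ?thesis using UWY sX i j by blast
      next
        case False
        then obtain k where k: "k \<in> {1..a} - {i}" "y \<in> A k" using y by blast
        have "y \<in> Y" using sideinY[OF Ak(1)[OF k(1)] Ak(2)[OF k(1)]] k(2) by blast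
        moreover have "y \<notin> X" using sides_disj[OF sym Ak(1)[OF k(1)] X Ak(2)[OF k(1)]] k(2) by blast
        ultimately show ?thesis using i j by blast
      qed
    qed
  qed
  have eq2: "A i - B j = (W - U) \<union> (\<Union>k\<in>{1..b} - {j}. B k)"
  proof
    show "A i - B j \<subseteq> (W - U) \<union> (\<Union>k\<in>{1..b} - {j}. B k)"
    proof
      fix x assume x: "x \<in> A i - B j"
      then have xX: "x \<in> X" "x \<notin> Y" using i j by auto
      then have xV: "x \<in> V - U" using sX by blast
      show "x \<in> (W - U) \<union> (\<Union>k\<in>{1..b} - {j}. B k)"
      proof (cases "x \<in> W")
        case True then show ?thesis using xV by blast
      next
        case False
        then obtain Y'' where Y'': "Y'' \<in> sides V E W" "x \<in> Y''" using in_some_side[of x V W E] xV by blast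
        then have "Y'' \<in> B ` {1..b}" using Bim by simp
        then obtain k where k: "k \<in> {1..b}" "B k = Y''" by (metis imageE)
        have "k \<noteq> j" using k j xX Y'' by blast
        then show ?thesis using k Y'' by blast
      qed
    qed
    show "(W - U) \<union> (\<Union>k\<in>{1..b} - {j}. B k) \<subseteq> A i - B j"
    proof
      fix y assume y: "y \<in> (W - U) \<union> (\<Union>k\<in>{1..b} - {j}. B k)"
      show "y \<in> A i - B j"
      proof (cases "y \<in> W - U")
        case True then show ?thesis using WX sY i j by blast
      next
        case False
        then obtain k where k: "k \<in> {1..b} - {j}" "y \<in> B k" using y by blast
        have yV: "y \<in> V - W" using side_sub[OF Bk(1)[OF k(1)]] k(2) by blast
        have nY: "y \<notin> Y" using sides_disj[OF sym Bk(1)[OF k(1)] Y Bk(2)[OF k(1)]] k(2) by blast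
        have nU: "y \<notin> U" using UWY nY yV by blast
        then obtain X'' where X'': "X'' \<in> sides V E U" "y \<in> X''" using in_some_side[of y V U E] yV by blast
        have "X'' = X"
        proof (rule ccontr)
          assume "X'' \<noteq> X"
          then have "y \<in> Y" using sideinY[OF X''(1)] X''(2) by blast
          then show False using nY by blast
        qed
        then show ?thesis using X'' nY i j by blast
      qed
    qed
  qed
  have "laminar_cut V E U W" unfolding laminar_cut_def using Ucut Wcut X WX by blast
  show ?thesis
  proof (rule conjI[OF \<open>laminar_cut V E U W\<close>])
    show "\<exists>i\<in>{1..a}. \<exists>j\<in>{1..b}.
          B j - A i = (U - W) \<union> (\<Union>k\<in>{1..a} - {i}. A k) \<and>
          A i - B j = (W - U) \<union> (\<Union>k\<in>{1..b} - {j}. B k)"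
      using conjI[OF eq1 eq2] i(1) j(1) by blast
  qed
qed

lemma row_small:
  assumes g: "simple_graph V E" and Uc: "kappa_cut V E U" and Wc: "kappa_cut V E W"
    and X0: "X0 \<in> sides V E U" and X1: "X1 \<in> sides V E U" and X01: "X1 \<noteq> X0"
    and sub: "\<forall>X\<in>sides V E U - {X0}. X \<subseteq> W"
  shows "small_with_large_side V E (kappa V E - 1) U X0"
proof -
  have sym: "\<forall>u v. E u v \<longrightarrow> E v u" and fin: "finite V" using g unfolding simple_graph_def by auto
  have UV: "U \<subseteq> V" and cU: "card U = kappa V E" and Ucut: "is_cut V E U" using Uc unfolding kappa_cut_def is_cut_def by auto
  have WV: "W \<subseteq> V" and cW: "card W = kappa V E" and Wcut: "is_cut V E W" using Wc unfolding kappa_cut_def is_cut_def by auto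
  have fU: "finite U" and fW: "finite W" using UV WV fin finite_subset by blast+
  let ?S = "sides V E U - {X0}"
  let ?Z = "\<Union>?S"
  have pd: "pairwise disjnt ?S" unfolding pairwise_def disjnt_def using sides_disj[OF sym] by blast
  have fS: "finite A" if "A \<in> ?S" for A using that side_sub fin finite_subset by (metis DiffD1 Diff_subset)
  have sumZ: "card ?Z = (\<Sum>S\<in>?S. card S)" by (rule card_Union_disjoint[OF pd fS])
  have ZW: "?Z \<subseteq> W" using sub by blast
  have ZneW: "?Z \<noteq> W"
  proof
    assume ZW: "?Z = W"
    obtain x y where xy: "x \<in> V - W" "y \<in> V - W" "\<not> reach_in E (V - W) x y"
      using Wcut unfolding is_cut_def by blast
    have X0W: "X0 \<inter> W = {}" using ZW sides_disj[OF sym X0] by blast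
    have sX0: "X0 \<subseteq> V - W" using X0W side_sub[OF X0] by blast
    obtain x0 where x0: "x0 \<in> X0" using side_ne[OF X0] by blast
    have reach0: "reach_in E (V - W) x0 z" if z: "z \<in> V - W" for z
    proof (cases "z \<in> U")
      case True
      obtain x where x: "x \<in> X0" "E z x" using neighbor[OF g Uc X0 X1 X01[symmetric] True] by blast
      have "reach_in E X0 x0 x" by (rule side_connected[OF sym X0 x0 x(1)])
      then have r: "reach_in E (V - W) x0 x" by (rule reach_in_mono[OF sX0])
      have "E x z" using x sym by blast
      then show ?thesis using reach_in_step[OF r] z by blast
    next
      case False
      then obtain X'' where X'': "X'' \<in> sides V E U" "z \<in> X''" using in_some_side[of z V U E] z by blast
      have "X'' = X0"
      proof (rule ccontr)
        assume "X'' \<noteq> X0" then have "z \<in> W" using ZW X'' by blast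
        then show False using z by blast
      qed
      then have "reach_in E X0 x0 z" using side_connected[OF sym X0 x0] X''(2) by blast
      then show ?thesis by (rule reach_in_mono[OF sX0])
    qed
    have "reach_in E (V - W) x y"
      using reach_in_trans[OF reach_in_sym[OF sym reach0[OF xy(1)]] reach0[OF xy(2)]] .
    then show False using xy(3) by blast
  qed
  have "card ?Z < card W" using psubset_card_mono[OF fW] ZW ZneW by blast
  then have "(\<Sum>S\<in>?S. card S) \<le> kappa V E - 1" using sumZ cW by simp
  then show ?thesis unfolding small_with_large_side_def using Ucut X0 by blast
qed


lemma all4: "(\<forall>i<(4::nat). P i) = (P 0 \<and> P 1 \<and> P 2 \<and> P 3)"
proof
  assume "\<forall>i<(4::nat). P i" then show "P 0 \<and> P 1 \<and> P 2 \<and> P 3" by simp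
next
  assume h: "P 0 \<and> P 1 \<and> P 2 \<and> P 3"
  show "\<forall>i<(4::nat). P i"
  proof (intro allI impI)
    fix i :: nat assume "i < 4"
    then have "i = 0 \<or> i = 1 \<or> i = 2 \<or> i = 3" by auto
    then show "P i" using h by auto
  qed
qed

lemma side_disconnects:
  assumes sym: "\<forall>u v. E u v \<longrightarrow> E v u" and X: "X \<in> sides V E U" and X': "X' \<in> sides V E U" and XX': "X \<noteq> X'"
  shows "disconnects V E U X"
proof -
  have sX: "X \<subseteq> V - U" by (rule side_sub[OF X])
  have sX': "X' \<subseteq> V - U" by (rule side_sub[OF X'])
  have d: "X \<inter> X' = {}" by (rule sides_disj[OF sym X X' XX'])
  have "X' \<noteq> {}" by (rule side_ne[OF X'])
  then have ne: "V - (U \<union> X) \<noteq> {}" using sX' d by blast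
  have nr: "\<forall>x\<in>X. \<forall>y\<in>V - (U \<union> X). \<not> reach_in E (V - U) x y"
  proof (intro ballI notI)
    fix x y assume x: "x \<in> X" and y: "y \<in> V - (U \<union> X)" and r: "reach_in E (V - U) x y"
    have "y \<in> X" by (rule side_reach[OF sym X x r])
    then show False using y by blast
  qed
  show ?thesis unfolding disconnects_def using sX side_ne[OF X] ne nr by blast
qed

lemma wheel_case:
  assumes g: "simple_graph V E" and Uc: "kappa_cut V E U" and Wc: "kappa_cut V E W"
    and SU: "sides V E U = {A1, A2}" and A12: "A1 \<noteq> A2"
    and SW: "sides V E W = {B1, B2}" and B12: "B1 \<noteq> B2"
    and c11: "A1 \<inter> B1 \<noteq> {}" and c12: "A1 \<inter> B2 \<noteq> {}" and c21: "A2 \<inter> B1 \<noteq> {}" and c22: "A2 \<inter> B2 \<noteq> {}"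
    and w1: "W \<inter> A1 \<noteq> {}" and w2: "W \<inter> A2 \<noteq> {}" and u1: "U \<inter> B1 \<noteq> {}" and u2: "U \<inter> B2 \<noteq> {}"
  shows "forms_wheel V E 4 (U \<inter> W) [U \<inter> B1, W \<inter> A1, U \<inter> B2, W \<inter> A2] [A1 \<inter> B1, A1 \<inter> B2, A2 \<inter> B2, A2 \<inter> B1]"
proof -
  have sym: "\<forall>u v. E u v \<longrightarrow> E v u" using g unfolding simple_graph_def by auto
  have UV: "U \<subseteq> V" using Uc unfolding kappa_cut_def is_cut_def by auto
  have WV: "W \<subseteq> V" using Wc unfolding kappa_cut_def is_cut_def by auto
  have A1: "A1 \<in> sides V E U" and A2: "A2 \<in> sides V E U" using SU by auto
  have B1: "B1 \<in> sides V E W" and B2: "B2 \<in> sides V E W" using SW by auto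
  have dA: "A1 \<inter> A2 = {}" by (rule sides_disj[OF sym A1 A2 A12])
  have dB: "B1 \<inter> B2 = {}" by (rule sides_disj[OF sym B1 B2 B12])
  have cA: "V - U = A1 \<union> A2" using sides_cover[of V U E] SU by simp
  have cB: "V - W = B1 \<union> B2" using sides_cover[of V W E] SW by simp
  have eU: "U \<inter> B1 \<union> U \<inter> W \<union> U \<inter> B2 = U" using cB UV by blast
  have eU': "U \<inter> B2 \<union> U \<inter> W \<union> U \<inter> B1 = U" using cB UV by blast
  have eW: "W \<inter> A1 \<union> U \<inter> W \<union> W \<inter> A2 = W" using cA WV by blast
  have eW': "W \<inter> A2 \<union> U \<inter> W \<union> W \<inter> A1 = W" using cA WV by blast
  have eA1: "A1 \<inter> B1 \<union> W \<inter> A1 \<union> A1 \<inter> B2 = A1" using cA cB by blast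
  have eA2: "A2 \<inter> B2 \<union> W \<inter> A2 \<union> A2 \<inter> B1 = A2" using cA cB by blast
  have eB2: "A1 \<inter> B2 \<union> U \<inter> B2 \<union> A2 \<inter> B2 = B2" using cA cB by blast
  have eB1: "A2 \<inter> B1 \<union> U \<inter> B1 \<union> A1 \<inter> B1 = B1" using cA cB by blast
  have dis1: "disconnects V E U A1" by (rule side_disconnects[OF sym A1 A2 A12])
  have dis2: "disconnects V E U A2" by (rule side_disconnects[OF sym A2 A1 A12[symmetric]])
  have dis3: "disconnects V E W B1" by (rule side_disconnects[OF sym B1 B2 B12])
  have dis4: "disconnects V E W B2" by (rule side_disconnects[OF sym B2 B1 B12[symmetric]])
  let ?C = "[U \<inter> B1, W \<inter> A1, U \<inter> B2, W \<inter> A2]"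
  let ?S = "[A1 \<inter> B1, A1 \<inter> B2, A2 \<inter> B2, A2 \<inter> B1]"
  have last: "\<forall>i<4. kappa_cut V E (?C ! i \<union> U \<inter> W \<union> ?C ! ((i + 2) mod 4))
            \<and> disconnects V E (?C ! i \<union> U \<inter> W \<union> ?C ! ((i + 2) mod 4))
                 (?S ! i \<union> ?C ! ((i + 1) mod 4) \<union> ?S ! ((i + 1) mod 4))"
    unfolding all4 using eU eU' eW eW' eA1 eA2 eB1 eB2 dis1 dis2 dis3 dis4 Uc Wc by simp
  have cover: "U \<inter> W \<union> \<Union>(set ?C) \<union> \<Union>(set ?S) = V" using cA cB UV WV by auto
  have nonempty: "\<forall>i<4. U \<inter> W \<inter> ?C ! i = {} \<and> U \<inter> W \<inter> ?S ! i = {} \<and> ?C ! i \<noteq> {} \<and> ?S ! i \<noteq> {}"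
    unfolding all4 using cA cB c11 c12 c21 c22 w1 w2 u1 u2 by auto
  have disj1: "\<forall>i<4. \<forall>j<4. ?C ! i \<inter> ?S ! j = {}"
    unfolding all4 using cA cB by auto
  have disj2: "\<forall>i<4. \<forall>j<4. i \<noteq> j \<longrightarrow> ?C ! i \<inter> ?C ! j = {} \<and> ?S ! i \<inter> ?S ! j = {}"
    unfolding all4 using cA cB dA dB by auto
  show ?thesis unfolding forms_wheel_def using last cover nonempty disj1 disj2 by simp
qed


lemma crossing_case:
  assumes g: "simple_graph V E" and Uc: "kappa_cut V E U" and Wc: "kappa_cut V E W"
    and SU: "sides V E U = {A1, A2}" and A12: "A1 \<noteq> A2"
    and SW: "sides V E W = {B1, B2}" and B12: "B1 \<noteq> B2"
    and c11: "A1 \<inter> B1 \<noteq> {}" and c22: "A2 \<inter> B2 \<noteq> {}" and c12: "A1 \<inter> B2 = {}"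
    and w1: "W \<inter> A1 \<noteq> {}" and w2: "W \<inter> A2 \<noteq> {}" and u1: "U \<inter> B1 \<noteq> {}" and u2: "U \<inter> B2 \<noteq> {}"
  shows "A1 \<inter> B1 \<noteq> {} \<and> A2 \<inter> B2 \<noteq> {} \<and> A1 \<inter> B2 = {} \<and>
             card (W \<inter> A2) = card (U \<inter> B1) \<and> card (U \<inter> B1) > 0 \<and>
             card (W \<inter> A1) = card (U \<inter> B2) \<and> card (U \<inter> B2) > 0 \<and>
             crossing_matching_cut V E U A1 (U \<inter> B2) W \<and>
             (A2 \<inter> B1 \<noteq> {} \<longrightarrow> card (U \<inter> B1) \<ge> card (U \<inter> B2))"
proof -
  have sym: "\<forall>u v. E u v \<longrightarrow> E v u" and fin: "finite V" using g unfolding simple_graph_def by auto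
  have UV: "U \<subseteq> V" and Ucut: "is_cut V E U" using Uc unfolding kappa_cut_def is_cut_def by auto
  have WV: "W \<subseteq> V" using Wc unfolding kappa_cut_def is_cut_def by auto
  have fU: "finite U" and fW: "finite W" using UV WV fin finite_subset by blast+
  have A1: "A1 \<in> sides V E U" and A2: "A2 \<in> sides V E U" using SU by auto
  have B1: "B1 \<in> sides V E W" and B2: "B2 \<in> sides V E W" using SW by auto
  have dA: "A1 \<inter> A2 = {}" by (rule sides_disj[OF sym A1 A2 A12])
  have dB: "B1 \<inter> B2 = {}" by (rule sides_disj[OF sym B1 B2 B12])
  have cA: "V - U = A1 \<union> A2" using sides_cover[of V U E] SU by simp
  have cB: "V - W = B1 \<union> B2" using sides_cover[of V W E] SW by simp
  note d = diag[OF g Uc Wc A1 A2 A12 B1 B2 B12 c11 c22]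
  have e1: "card (W \<inter> A2) = card (U \<inter> B1)" using d(1) d(3) by linarith
  have e2: "card (W \<inter> A1) = card (U \<inter> B2)" using d(2) d(3) by linarith
  have p1: "card (U \<inter> B1) > 0" using u1 fU by (simp add: card_gt_0_iff)
  have p2: "card (U \<inter> B2) > 0" using u2 fU by (simp add: card_gt_0_iff)
  have last: "A2 \<inter> B1 \<noteq> {} \<longrightarrow> card (U \<inter> B1) \<ge> card (U \<inter> B2)"
  proof
    assume c21: "A2 \<inter> B1 \<noteq> {}"
    have "kappa V E \<le> card (W \<inter> A2) + card (U \<inter> W) + card (U \<inter> B1)"
      using kappa_le[OF corner_cut[OF sym UV WV A2 B1 c21 A1 A12[symmetric]]] card3_le order_trans by blast
    then show "card (U \<inter> B1) \<ge> card (U \<inter> B2)" using d(3) e2 by linarith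
  qed
  let ?N = "(W \<inter> A1) \<union> (U \<inter> W) \<union> (U \<inter> B1)"
  let ?W' = "(U - U \<inter> B2) \<union> (W \<inter> A1)"
  have W'N: "?W' = ?N" using cB UV dB by blast
  have Ncut: "is_cut V E ?N" by (rule corner_cut[OF sym UV WV A1 B1 c11 A2 A12])
  have "card ?N \<le> kappa V E" using card3_le[of "W \<inter> A1" "U \<inter> W" "U \<inter> B1"] d(1) by linarith
  then have cN: "card ?N = kappa V E" using kappa_le[OF Ncut] by linarith
  have W'k: "kappa_cut V E ?W'" unfolding W'N kappa_cut_def using Ncut cN by blast
  have A1W': "A1 - ?W' = A1 \<inter> B1" using cA cB c12 dA by blast
  have sep: "separates V E ?W' ((U \<inter> B2) \<union> (V - (U \<union> A1))) (A1 - ?W')"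
    unfolding separates_def
  proof (intro conjI ballI notI)
    show "(U \<inter> B2 \<union> (V - (U \<union> A1))) \<inter> ?W' = {}" using cA cB dA dB by blast
    show "(A1 - ?W') \<inter> ?W' = {}" by blast
  next
    fix x y assume x: "x \<in> U \<inter> B2 \<union> (V - (U \<union> A1))" and y: "y \<in> A1 - ?W'"
      and r: "reach_in E (V - ?W') x y"
    have r': "reach_in E (V - ?N) y x" using reach_in_sym[OF sym r] W'N by simp
    have yC: "y \<in> A1 \<inter> B1" using y A1W' by simp
    have "x \<in> A1 \<inter> B1"
    proof (rule reach_in_closed[OF yC _ r'])
      fix c z assume "c \<in> A1 \<inter> B1" "z \<in> V - ?N" "E c z"
      then show "z \<in> A1 \<inter> B1" by (rule corner_closed[OF sym A1 B1])
    qed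
    then show False using x cA by blast
  qed
  have mc: "matching_cut V E U A1 (U \<inter> B2) ?W'"
    unfolding matching_cut_def using Ucut A1 W'k sep A1W' c11 by blast
  have cmc: "crossing_matching_cut V E U A1 (U \<inter> B2) W"
    unfolding crossing_matching_cut_def using Ucut u2 A12 SU Wc w2 mc by blast
  show ?thesis using c11 c22 c12 e1 e2 p1 p2 cmc last by blast
qed

lemma final22:
  assumes g: "simple_graph V E" and Uc: "kappa_cut V E U" and Wc: "kappa_cut V E W"
    and SU: "sides V E U = {A1, A2}" and A12: "A1 \<noteq> A2"
    and SW: "sides V E W = {B1, B2}" and B12: "B1 \<noteq> B2"
    and w1: "W \<inter> A1 \<noteq> {}" and w2: "W \<inter> A2 \<noteq> {}" and u1: "U \<inter> B1 \<noteq> {}" and u2: "U \<inter> B2 \<noteq> {}"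
    and dg: "(A1 \<inter> B1 \<noteq> {} \<and> A2 \<inter> B2 \<noteq> {}) \<or> (A1 \<inter> B2 \<noteq> {} \<and> A2 \<inter> B1 \<noteq> {})"
  shows "forms_wheel V E 4 (U \<inter> W) [U \<inter> B1, W \<inter> A1, U \<inter> B2, W \<inter> A2] [A1 \<inter> B1, A1 \<inter> B2, A2 \<inter> B2, A2 \<inter> B1]
     \<or> (\<exists>A1' A2' B1' B2'. (A1', A2') \<in> {(A1, A2), (A2, A1)} \<and> (B1', B2') \<in> {(B1, B2), (B2, B1)} \<and>
             A1' \<inter> B1' \<noteq> {} \<and> A2' \<inter> B2' \<noteq> {} \<and> A1' \<inter> B2' = {} \<and>
             card (W \<inter> A2') = card (U \<inter> B1') \<and> card (U \<inter> B1') > 0 \<and>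
             card (W \<inter> A1') = card (U \<inter> B2') \<and> card (U \<inter> B2') > 0 \<and>
             crossing_matching_cut V E U A1' (U \<inter> B2') W \<and>
             (A2' \<inter> B1' \<noteq> {} \<longrightarrow> card (U \<inter> B1') \<ge> card (U \<inter> B2')))"
proof (cases "A1 \<inter> B1 \<noteq> {} \<and> A1 \<inter> B2 \<noteq> {} \<and> A2 \<inter> B1 \<noteq> {} \<and> A2 \<inter> B2 \<noteq> {}")
  case True
  then have h: "A1 \<inter> B1 \<noteq> {}" "A1 \<inter> B2 \<noteq> {}" "A2 \<inter> B1 \<noteq> {}" "A2 \<inter> B2 \<noteq> {}" by auto
  show ?thesis by (rule disjI1, rule wheel_case[OF g Uc Wc SU A12 SW B12 h w1 w2 u1 u2])
next
  case False
  have SU': "sides V E U = {A2, A1}" using SU by auto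
  have SW': "sides V E W = {B2, B1}" using SW by auto
  consider (a) "A1 \<inter> B2 = {}" | (b) "A2 \<inter> B1 = {}" | (c) "A1 \<inter> B1 = {}" | (d) "A2 \<inter> B2 = {}"
    using False by blast
  then show ?thesis
  proof cases
    case a
    then have h: "A1 \<inter> B1 \<noteq> {}" "A2 \<inter> B2 \<noteq> {}" using dg by auto
    have X: "A1 \<inter> B1 \<noteq> {} \<and> A2 \<inter> B2 \<noteq> {} \<and> A1 \<inter> B2 = {} \<and>
             card (W \<inter> A2) = card (U \<inter> B1) \<and> card (U \<inter> B1) > 0 \<and>
             card (W \<inter> A1) = card (U \<inter> B2) \<and> card (U \<inter> B2) > 0 \<and>
             crossing_matching_cut V E U A1 (U \<inter> B2) W \<and>
             (A2 \<inter> B1 \<noteq> {} \<longrightarrow> card (U \<inter> B1) \<ge> card (U \<inter> B2))" using crossing_case[OF g Uc Wc SU A12 SW B12 h a w1 w2 u1 u2] .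
    show ?thesis
      apply (rule disjI2)
      apply (rule exI[of _ A1], rule exI[of _ A2], rule exI[of _ B1], rule exI[of _ B2])
      apply (rule conjI, simp, rule conjI, simp)
      by (rule X)
  next
    case b
    then have h: "A2 \<inter> B2 \<noteq> {}" "A1 \<inter> B1 \<noteq> {}" using dg by auto
    have X: "A2 \<inter> B2 \<noteq> {} \<and> A1 \<inter> B1 \<noteq> {} \<and> A2 \<inter> B1 = {} \<and>
             card (W \<inter> A1) = card (U \<inter> B2) \<and> card (U \<inter> B2) > 0 \<and>
             card (W \<inter> A2) = card (U \<inter> B1) \<and> card (U \<inter> B1) > 0 \<and>
             crossing_matching_cut V E U A2 (U \<inter> B1) W \<and>
             (A1 \<inter> B2 \<noteq> {} \<longrightarrow> card (U \<inter> B2) \<ge> card (U \<inter> B1))" using crossing_case[OF g Uc Wc SU' A12[symmetric] SW' B12[symmetric] h b w2 w1 u2 u1] .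
    show ?thesis
      apply (rule disjI2)
      apply (rule exI[of _ A2], rule exI[of _ A1], rule exI[of _ B2], rule exI[of _ B1])
      apply (rule conjI, simp, rule conjI, simp)
      by (rule X)
  next
    case c
    then have h: "A1 \<inter> B2 \<noteq> {}" "A2 \<inter> B1 \<noteq> {}" using dg by auto
    have X: "A1 \<inter> B2 \<noteq> {} \<and> A2 \<inter> B1 \<noteq> {} \<and> A1 \<inter> B1 = {} \<and>
             card (W \<inter> A2) = card (U \<inter> B2) \<and> card (U \<inter> B2) > 0 \<and>
             card (W \<inter> A1) = card (U \<inter> B1) \<and> card (U \<inter> B1) > 0 \<and>
             crossing_matching_cut V E U A1 (U \<inter> B1) W \<and>
             (A2 \<inter> B2 \<noteq> {} \<longrightarrow> card (U \<inter> B2) \<ge> card (U \<inter> B1))" using crossing_case[OF g Uc Wc SU A12 SW' B12[symmetric] h c w1 w2 u2 u1] .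
    show ?thesis
      apply (rule disjI2)
      apply (rule exI[of _ A1], rule exI[of _ A2], rule exI[of _ B2], rule exI[of _ B1])
      apply (rule conjI, simp, rule conjI, simp)
      by (rule X)
  next
    case d
    then have h: "A2 \<inter> B1 \<noteq> {}" "A1 \<inter> B2 \<noteq> {}" using dg by auto
    have X: "A2 \<inter> B1 \<noteq> {} \<and> A1 \<inter> B2 \<noteq> {} \<and> A2 \<inter> B2 = {} \<and>
             card (W \<inter> A1) = card (U \<inter> B1) \<and> card (U \<inter> B1) > 0 \<and>
             card (W \<inter> A2) = card (U \<inter> B2) \<and> card (U \<inter> B2) > 0 \<and>
             crossing_matching_cut V E U A2 (U \<inter> B2) W \<and>
             (A1 \<inter> B1 \<noteq> {} \<longrightarrow> card (U \<inter> B1) \<ge> card (U \<inter> B2))" using crossing_case[OF g Uc Wc SU' A12[symmetric] SW B12 h d w2 w1 u1 u2] .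
    show ?thesis
      apply (rule disjI2)
      apply (rule exI[of _ A2], rule exI[of _ A1], rule exI[of _ B1], rule exI[of _ B2])
      apply (rule conjI, simp, rule conjI, simp)
      by (rule X)
  qed
qed


lemma side_in_other:
  assumes sym: "\<forall>u v. E u v \<longrightarrow> E v u" and X: "X \<in> sides V E U"
    and h: "\<forall>Y\<in>sides V E W. X \<inter> Y = {}"
  shows "X \<subseteq> W"
proof
  fix x assume x: "x \<in> X"
  show "x \<in> W"
  proof (rule ccontr)
    assume "x \<notin> W"
    moreover have "x \<in> V" using side_sub[OF X] x by blast
    ultimately obtain Y where "Y \<in> sides V E W" "x \<in> Y" using in_some_side[of x V W E] by blast
    then show False using h x by blast
  qed
qed

lemma no_diag_case:
  assumes sym: "\<forall>u v. E u v \<longrightarrow> E v u"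
    and neU: "sides V E U \<noteq> {}"
    and nd: "\<forall>X\<in>sides V E U. \<forall>X'\<in>sides V E U. \<forall>Y\<in>sides V E W. \<forall>Y'\<in>sides V E W.
               X \<noteq> X' \<longrightarrow> Y \<noteq> Y' \<longrightarrow> X \<inter> Y \<noteq> {} \<longrightarrow> X' \<inter> Y' = {}"
  shows "(\<exists>X0\<in>sides V E U. \<forall>X\<in>sides V E U - {X0}. X \<subseteq> W)
       \<or> (\<exists>Y0\<in>sides V E W. \<forall>Y\<in>sides V E W - {Y0}. Y \<subseteq> U)"
proof (cases "\<exists>X1\<in>sides V E U. \<exists>Y1\<in>sides V E W. X1 \<inter> Y1 \<noteq> {}")
  case False
  have "X \<subseteq> W" if X: "X \<in> sides V E U" for X
  proof (rule side_in_other[OF sym X])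
    show "\<forall>Y\<in>sides V E W. X \<inter> Y = {}" using False X by blast
  qed
  then show ?thesis using neU by blast
next
  case True
  then obtain X1 Y1 where X1: "X1 \<in> sides V E U" and Y1: "Y1 \<in> sides V E W" and c1: "X1 \<inter> Y1 \<noteq> {}" by blast
  show ?thesis
  proof (cases "\<exists>X2\<in>sides V E U. X2 \<noteq> X1 \<and> (\<exists>Y2\<in>sides V E W. X2 \<inter> Y2 \<noteq> {})")
    case False
    have "X \<subseteq> W" if X: "X \<in> sides V E U - {X1}" for X
    proof (rule side_in_other[OF sym])
      show "X \<in> sides V E U" using X by blast
      show "\<forall>Y\<in>sides V E W. X \<inter> Y = {}" using False X by blast
    qed
    then show ?thesis using X1 by blast
  next
    case True
    then obtain X2 Y2 where X2: "X2 \<in> sides V E U" "X2 \<noteq> X1" and Y2: "Y2 \<in> sides V E W" and c2: "X2 \<inter> Y2 \<noteq> {}" by blast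
    have "Y2 = Y1"
    proof (rule ccontr)
      assume "Y2 \<noteq> Y1"
      then have "X1 \<inter> Y1 = {}" using nd[rule_format, OF X2(1) X1 Y2 Y1 X2(2)] c2 by blast
      then show False using c1 by blast
    qed
    have "\<forall>Y\<in>sides V E W - {Y1}. Y \<subseteq> U"
    proof
      fix Y assume Y: "Y \<in> sides V E W - {Y1}"
      have "\<forall>X\<in>sides V E U. Y \<inter> X = {}"
      proof
        fix X assume X: "X \<in> sides V E U"
        show "Y \<inter> X = {}"
        proof (rule ccontr)
          assume ne: "Y \<inter> X \<noteq> {}"
          show False
          proof (cases "X = X1")
            case False
            then have "X1 \<inter> Y1 = {}" using nd[rule_format, OF X X1 _ Y1 False] Y ne by blast
            then show False using c1 by blast
          next
            case True
            then have "X \<noteq> X2" using X2 by blast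
            then have "X2 \<inter> Y1 = {}" using nd[rule_format, OF X X2(1) _ Y1 \<open>X \<noteq> X2\<close>] Y ne by blast
            then show False using c2 \<open>Y2 = Y1\<close> by blast
          qed
        qed
      qed
      moreover have "Y \<in> sides V E W" using Y by blast
      ultimately show "Y \<subseteq> U" using side_in_other[OF sym, of Y V W U] by blast
    qed
    then show ?thesis using Y1 by blast
  qed
qed

theorem theorem2:
  fixes V :: "'v set" and E :: "'v \<Rightarrow> 'v \<Rightarrow> bool"
    and U W :: "'v set" and A B :: "nat \<Rightarrow> 'v set" and a b :: nat
  assumes graph: "simple_graph V E" and conn: "connected_graph V E"
    and noncomplete: "\<not> complete_graph V E"
    and kappa_small: "4 * kappa V E < card V"
    and U_cut: "kappa_cut V E U" and W_cut: "kappa_cut V E W" and UW: "W \<noteq> U"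
    and a2: "a \<ge> 2" and b2: "b \<ge> 2"
    and A_sides: "bij_betw A {1..a} (sides V E U)"
    and B_sides: "bij_betw B {1..b} (sides V E W)"
  shows
    "(laminar_cut V E U W \<and>
       (\<exists>i\<in>{1..a}. \<exists>j\<in>{1..b}.
          B j - A i = (U - W) \<union> (\<Union>k\<in>{1..a} - {i}. A k) \<and>
          A i - B j = (W - U) \<union> (\<Union>k\<in>{1..b} - {j}. B k)))
     \<or> (a = 2 \<and> b = 2 \<and>
          forms_wheel V E 4 (U \<inter> W)
            [U \<inter> B 1, W \<inter> A 1, U \<inter> B 2, W \<inter> A 2]
            [A 1 \<inter> B 1, A 1 \<inter> B 2, A 2 \<inter> B 2, A 2 \<inter> B 1])
     \<or> (a = 2 \<and> b = 2 \<and>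
          (\<exists>A1 A2 B1 B2. (A1, A2) \<in> {(A 1, A 2), (A 2, A 1)} \<and> (B1, B2) \<in> {(B 1, B 2), (B 2, B 1)} \<and>
             A1 \<inter> B1 \<noteq> {} \<and> A2 \<inter> B2 \<noteq> {} \<and> A1 \<inter> B2 = {} \<and>
             card (W \<inter> A2) = card (U \<inter> B1) \<and> card (U \<inter> B1) > 0 \<and>
             card (W \<inter> A1) = card (U \<inter> B2) \<and> card (U \<inter> B2) > 0 \<and>
             crossing_matching_cut V E U A1 (U \<inter> B2) W \<and>
             (A2 \<inter> B1 \<noteq> {} \<longrightarrow> card (U \<inter> B1) \<ge> card (U \<inter> B2))))
     \<or> (\<exists>L. small_with_large_side V E (kappa V E - 1) U L \<and> (\<forall>S\<in>sides V E U - {L}. S \<subseteq> W))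
     \<or> (\<exists>L. small_with_large_side V E (kappa V E - 1) W L \<and> (\<forall>S\<in>sides V E W - {L}. S \<subseteq> U))"
proof -
  have sym: "\<forall>u v. E u v \<longrightarrow> E v u" and fin: "finite V" using graph unfolding simple_graph_def by auto
  have UV: "U \<subseteq> V" using U_cut unfolding kappa_cut_def is_cut_def by auto
  have WV: "W \<subseteq> V" using W_cut unfolding kappa_cut_def is_cut_def by auto
  have fU: "finite U" and fW: "finite W" using UV WV fin finite_subset by blast+
  have cardSU: "card (sides V E U) = a" using bij_betw_same_card[OF A_sides] by simp
  have cardSW: "card (sides V E W) = b" using bij_betw_same_card[OF B_sides] by simp
  have fSU: "finite (sides V E U)" and fSW: "finite (sides V E W)" using finite_sides[OF fin] by blast+
  have Aim: "A ` {1..a} = sides V E U" using A_sides by (rule bij_betw_imp_surj_on)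
  have Bim: "B ` {1..b} = sides V E W" using B_sides by (rule bij_betw_imp_surj_on)
  have Ainj: "inj_on A {1..a}" using A_sides by (rule bij_betw_imp_inj_on)
  have Binj: "inj_on B {1..b}" using B_sides by (rule bij_betw_imp_inj_on)
  show ?thesis
  proof (cases "\<exists>X\<in>sides V E U. W \<subseteq> U \<union> X")
    case True
    then obtain X where X: "X \<in> sides V E U" and WX: "W \<subseteq> U \<union> X" by blast
    show ?thesis using laminar_case[OF graph U_cut W_cut UW a2 A_sides B_sides X WX] by (rule disjI1)
  next
    case nl: False
    show ?thesis
    proof (cases "\<exists>X\<in>sides V E U. \<exists>X'\<in>sides V E U. \<exists>Y\<in>sides V E W. \<exists>Y'\<in>sides V E W.
               X \<noteq> X' \<and> Y \<noteq> Y' \<and> X \<inter> Y \<noteq> {} \<and> X' \<inter> Y' \<noteq> {}")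
      case True
      then obtain X X' Y Y' where X: "X \<in> sides V E U" and X': "X' \<in> sides V E U"
        and Y: "Y \<in> sides V E W" and Y': "Y' \<in> sides V E W" and XX': "X \<noteq> X'" and YY': "Y \<noteq> Y'"
        and XY: "X \<inter> Y \<noteq> {}" and XY': "X' \<inter> Y' \<noteq> {}" by blast
      note d = diag[OF graph U_cut W_cut X X' XX' Y Y' YY' XY XY']
      have WX: "W \<inter> X \<noteq> {}"
      proof
        assume "W \<inter> X = {}"
        then have "W \<subseteq> U \<union> X'" using d(5) by blast
        then show False using nl X' by blast
      qed
      have WX': "W \<inter> X' \<noteq> {}"
      proof
        assume "W \<inter> X' = {}"
        then have "W \<subseteq> U \<union> X" using d(5) by blast
        then show False using nl X by blast
      qed
      have UY: "U \<inter> Y \<noteq> {}"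
      proof
        assume "U \<inter> Y = {}"
        then have "card (W \<inter> X') = 0" using d(1) d(3) by simp
        then show False using WX' fW by simp
      qed
      have UY': "U \<inter> Y' \<noteq> {}"
      proof
        assume "U \<inter> Y' = {}"
        then have "card (W \<inter> X) = 0" using d(2) d(3) by simp
        then show False using WX fW by simp
      qed
      have SU: "sides V E U = {X, X'}" by (rule third_side[OF graph U_cut W_cut X X' XX' Y Y' YY' XY XY' WX WX'])
      have XY2: "Y \<inter> X \<noteq> {}" "Y' \<inter> X' \<noteq> {}" using XY XY' by blast+
      have SW: "sides V E W = {Y, Y'}"
        by (rule third_side[OF graph W_cut U_cut Y Y' YY' X X' XX' XY2 _ _]) (use UY UY' in blast)+
      have a2': "a = 2" using cardSU SU XX' by simp
      have b2': "b = 2" using cardSW SW YY' by simp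
      have "{1..a} = {1, 2::nat}" using a2' by auto
      then have SUA: "sides V E U = {A 1, A 2}" using Aim by auto
      have "{1..b} = {1, 2::nat}" using b2' by auto
      then have SWB: "sides V E W = {B 1, B 2}" using Bim by auto
      have A12: "A 1 \<noteq> A 2"
      proof
        assume "A 1 = A 2"
        then have "sides V E U = {A 1}" using SUA by simp
        then show False using cardSU a2' by simp
      qed
      have B12: "B 1 \<noteq> B 2"
      proof
        assume "B 1 = B 2"
        then have "sides V E W = {B 1}" using SWB by simp
        then show False using cardSW b2' by simp
      qed
      have XA: "(X = A 1 \<and> X' = A 2) \<or> (X = A 2 \<and> X' = A 1)" using SU SUA XX' by (auto simp: doubleton_eq_iff)
      have YB: "(Y = B 1 \<and> Y' = B 2) \<or> (Y = B 2 \<and> Y' = B 1)" using SW SWB YY' by (auto simp: doubleton_eq_iff)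
      have w1: "W \<inter> A 1 \<noteq> {}" and w2: "W \<inter> A 2 \<noteq> {}" using XA WX WX' by auto
      have u1: "U \<inter> B 1 \<noteq> {}" and u2: "U \<inter> B 2 \<noteq> {}" using YB UY UY' by auto
      have dg: "(A 1 \<inter> B 1 \<noteq> {} \<and> A 2 \<inter> B 2 \<noteq> {}) \<or> (A 1 \<inter> B 2 \<noteq> {} \<and> A 2 \<inter> B 1 \<noteq> {})"
        using XA YB XY XY' by auto
      note f = final22[OF graph U_cut W_cut SUA A12 SWB B12 w1 w2 u1 u2 dg]
      show ?thesis
      proof (rule disjE[OF f])
        assume h: "forms_wheel V E 4 (U \<inter> W) [U \<inter> B 1, W \<inter> A 1, U \<inter> B 2, W \<inter> A 2] [A 1 \<inter> B 1, A 1 \<inter> B 2, A 2 \<inter> B 2, A 2 \<inter> B 1]"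
        show ?thesis by (rule disjI2, rule disjI1, rule conjI[OF a2' conjI[OF b2' h]])
      next
        assume h: "\<exists>A1 A2 B1 B2. (A1, A2) \<in> {(A 1, A 2), (A 2, A 1)} \<and> (B1, B2) \<in> {(B 1, B 2), (B 2, B 1)} \<and>
             A1 \<inter> B1 \<noteq> {} \<and> A2 \<inter> B2 \<noteq> {} \<and> A1 \<inter> B2 = {} \<and>
             card (W \<inter> A2) = card (U \<inter> B1) \<and> card (U \<inter> B1) > 0 \<and>
             card (W \<inter> A1) = card (U \<inter> B2) \<and> card (U \<inter> B2) > 0 \<and>
             crossing_matching_cut V E U A1 (U \<inter> B2) W \<and>
             (A2 \<inter> B1 \<noteq> {} \<longrightarrow> card (U \<inter> B1) \<ge> card (U \<inter> B2))"
        show ?thesis by (rule disjI2, rule disjI2, rule disjI1, rule conjI[OF a2' conjI[OF b2' h]])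
      qed
    next
      case False
      then have nd: "\<forall>X\<in>sides V E U. \<forall>X'\<in>sides V E U. \<forall>Y\<in>sides V E W. \<forall>Y'\<in>sides V E W.
               X \<noteq> X' \<longrightarrow> Y \<noteq> Y' \<longrightarrow> X \<inter> Y \<noteq> {} \<longrightarrow> X' \<inter> Y' = {}" by blast
      have neU: "sides V E U \<noteq> {}" using cardSU a2 by auto
      show ?thesis
      proof (rule disjE[OF no_diag_case[OF sym neU nd]])
        assume "\<exists>X0\<in>sides V E U. \<forall>X\<in>sides V E U - {X0}. X \<subseteq> W"
        then obtain X0 where X0: "X0 \<in> sides V E U" and sub: "\<forall>X\<in>sides V E U - {X0}. X \<subseteq> W" by blast
        obtain X1 where X1: "X1 \<in> sides V E U" "X1 \<noteq> X0" using other_side[OF fSU _ X0] cardSU a2 by auto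
        have "small_with_large_side V E (kappa V E - 1) U X0"
          by (rule row_small[OF graph U_cut W_cut X0 X1 sub])
        then show ?thesis using sub by blast
      next
        assume "\<exists>Y0\<in>sides V E W. \<forall>Y\<in>sides V E W - {Y0}. Y \<subseteq> U"
        then obtain Y0 where Y0: "Y0 \<in> sides V E W" and sub: "\<forall>Y\<in>sides V E W - {Y0}. Y \<subseteq> U" by blast
        obtain Y1 where Y1: "Y1 \<in> sides V E W" "Y1 \<noteq> Y0" using other_side[OF fSW _ Y0] cardSW b2 by auto
        have "small_with_large_side V E (kappa V E - 1) W Y0"
          by (rule row_small[OF graph W_cut U_cut Y0 Y1 sub])
        then show ?thesis using sub by blast
      qed
    qed
  qed
qed

end
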